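(* Let $d\ge2$, let $A$ be a symmetric positive definite real $d\times d$ matrix, $G=(g_{ij})$ a real $d\times d$ matrix and $S=(s_{ij})$ a real symmetric $d\times d$ matrix. Let $\Phi(x)=\frac12\langle x,Sx\rangle$ and $\mu=e^{2\Phi}dx=e^{\langle x,Sx\rangle}dx$. Then $\mu$ is an infinitesimally invariant measure for $(L^{A,G},C_0^\infty(\mathbb R^d))$, where $L^{A,G}f=\frac12\mathrm{trace}(A\nabla^2f)+\langle Gx,\nabla f\rangle$, if and only if $$SG+G^TS=2SAS\quad\text{and}\quad\mathrm{trace}(G-AS)=0.$$ Moreover, with $H=(h_{ij}):=G-AS$, these two conditions are equivalent to the system $$\sum_{i=1}^d s_{ij}h_{ij}=0\ (1\le j\le d),\qquad \sum_{i=1}^d(s_{ij}h_{ik}+s_{ik}h_{ij})=0\ (1\le j<k\le d),\qquad\sum_{i=1}^dh_{ii}=0.$$ In particular, for $\widetilde Gx:=Sx+(G-AS)x$, the decomposition of $\widetilde Gx$ with potential $\Phi$ (so $\nabla\Phi(x)=Sx$) and remainder $(G-AS)x$ is a WHHD if and only if it is an SOHHD, if and only if $\mu$ is an infinitesimally invariant measure for $(L^{A,G},C_0^\infty(\mathbb R^d))$.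
   Context: A positive locally finite Borel measure $\hat\mu$ is an infinitesimally invariant measure for $(L,C_0^\infty(\mathbb R^d))$ if $Lf\in L^1(\hat\mu)$ and $\int Lf\,d\hat\mu=0$ for all $f\in C_0^\infty$. For a vector field $\widetilde{\mathbf G}$, a decomposition $\widetilde{\mathbf G}=\nabla\Phi+\mathbf B$ is a WHHD if $\int\langle\mathbf B,\nabla f\rangle e^{2\Phi}dx=0$ for all $f\in C_0^\infty$; it is an OHHD if $\int\langle\mathbf B,\nabla f\rangle dx=0$ for all $f\in C_0^\infty$ and $\langle\nabla\Phi,\mathbf B\rangle=0$ a.e.; it is a strictly orthogonal HHD (SOHHD) if it is an OHHD, $\widetilde{\mathbf G}$ is continuous and $\Phi,\mathbf B$ are continuously differentiable (so that $\mathrm{div}\mathbf B=0$ and $\langle\nabla\Phi,\mathbf B\rangle=0$ everywhere). *)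

theory Defs
  imports "HOL-Analysis.Analysis"
begin

definition pd :: "'n::finite \<Rightarrow> (real^'n \<Rightarrow> real) \<Rightarrow> real^'n \<Rightarrow> real" where
  "pd i f x = frechet_derivative f (at x) (axis i 1)"

fun iter_pd :: "'n::finite list \<Rightarrow> (real^'n \<Rightarrow> real) \<Rightarrow> real^'n \<Rightarrow> real" where
  "iter_pd [] f = f"
| "iter_pd (i # is) f = pd i (iter_pd is f)"

definition smooth :: "(real^'n::finite \<Rightarrow> real) \<Rightarrow> bool" where
  "smooth f \<longleftrightarrow> (\<forall>is x. iter_pd is f differentiable (at x))"

definition test_fun :: "(real^'n::finite \<Rightarrow> real) \<Rightarrow> bool" where
  "test_fun f \<longleftrightarrow> smooth f \<and> compact (closure {x. f x \<noteq> 0})"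

definition C1 :: "(real^'n::finite \<Rightarrow> real) \<Rightarrow> bool" where
  "C1 f \<longleftrightarrow> (\<forall>x. f differentiable (at x)) \<and> (\<forall>i. continuous_on UNIV (pd i f))"

definition C1_field :: "(real^'n::finite \<Rightarrow> real^'n) \<Rightarrow> bool" where
  "C1_field B \<longleftrightarrow> (\<forall>j. C1 (\<lambda>x. B x $ j))"

definition grad :: "(real^'n::finite \<Rightarrow> real) \<Rightarrow> real^'n \<Rightarrow> real^'n" where
  "grad f x = (\<chi> i. pd i f x)"

definition hess :: "(real^'n::finite \<Rightarrow> real) \<Rightarrow> real^'n \<Rightarrow> real^'n^'n" where
  "hess f x = (\<chi> i j. pd i (pd j f) x)"

definition LAG :: "real^'n^'n \<Rightarrow> real^'n^'n \<Rightarrow> (real^'n::finite \<Rightarrow> real) \<Rightarrow> real^'n \<Rightarrow> real" where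
  "LAG A G f x = 1/2 * trace (A ** hess f x) + (G *v x) \<bullet> grad f x"

definition inf_invariant :: "(real^'n::finite) measure \<Rightarrow> ((real^'n \<Rightarrow> real) \<Rightarrow> real^'n \<Rightarrow> real) \<Rightarrow> bool" where
  "inf_invariant M L \<longleftrightarrow>
     (\<forall>f. test_fun f \<longrightarrow> integrable M (L f) \<and> (\<integral>x. L f x \<partial>M) = 0)"

definition WHHD :: "(real^'n::finite \<Rightarrow> real^'n) \<Rightarrow> (real^'n \<Rightarrow> real) \<Rightarrow> (real^'n \<Rightarrow> real^'n) \<Rightarrow> bool" where
  "WHHD Gt Phi B \<longleftrightarrow> (\<forall>x. Phi differentiable (at x)) \<and> (\<forall>x. Gt x = grad Phi x + B x) \<and>
     (\<forall>f. test_fun f \<longrightarrow> (\<integral>x. (B x \<bullet> grad f x) * exp (2 * Phi x) \<partial>lborel) = 0)"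

definition OHHD :: "(real^'n::finite \<Rightarrow> real^'n) \<Rightarrow> (real^'n \<Rightarrow> real) \<Rightarrow> (real^'n \<Rightarrow> real^'n) \<Rightarrow> bool" where
  "OHHD Gt Phi B \<longleftrightarrow> (\<forall>x. Phi differentiable (at x)) \<and> (\<forall>x. Gt x = grad Phi x + B x) \<and>
     (\<forall>f. test_fun f \<longrightarrow> (\<integral>x. B x \<bullet> grad f x \<partial>lborel) = 0) \<and>
     (AE x in lborel. grad Phi x \<bullet> B x = 0)"

definition SOHHD :: "(real^'n::finite \<Rightarrow> real^'n) \<Rightarrow> (real^'n \<Rightarrow> real) \<Rightarrow> (real^'n \<Rightarrow> real^'n) \<Rightarrow> bool" where
  "SOHHD Gt Phi B \<longleftrightarrow> OHHD Gt Phi B \<and> continuous_on UNIV Gt \<and> C1 Phi \<and> C1_field B"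

end

theory Submission
  imports Defs "HOL-Computational_Algebra.Polynomial"
begin

fun PP :: "nat \<Rightarrow> real poly" where
  "PP 0 = 1"
| "PP (Suc k) = [:0,0,1:] * (PP k - pderiv (PP k))"

definition psi :: "nat \<Rightarrow> real \<Rightarrow> real" where
  "psi k t = (if t > 0 then poly (PP k) (inverse t) * exp (- inverse t) else 0)"

lemma poly_exp_lim: "((\<lambda>u. poly p u / exp u) \<longlongrightarrow> (0::real)) at_top"
proof -
  have "((\<lambda>u. \<Sum>i\<le>degree p. coeff p i * (u ^ i / exp u)) \<longlongrightarrow> (\<Sum>i\<le>degree p. coeff p i * 0)) at_top"
    by (intro tendsto_intros tendsto_power_div_exp_0)
  moreover have "(\<lambda>u. \<Sum>i\<le>degree p. coeff p i * (u ^ i / exp u)) = (\<lambda>u. poly p u / exp u)"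
    by (auto simp: poly_altdef sum_divide_distrib)
  ultimately show ?thesis by simp
qed

lemma poly_exp_lim0: "((\<lambda>t. poly p (inverse t) * exp (- inverse t)) \<longlongrightarrow> (0::real)) (at_right 0)"
proof -
  have "((\<lambda>t. poly p (inverse t) / exp (inverse t)) \<longlongrightarrow> (0::real)) (at_right 0)"
    by (rule filterlim_compose[OF poly_exp_lim filterlim_inverse_at_top_right])
  then show ?thesis by (simp add: exp_minus field_simps)
qed

lemma psi_deriv_pos:
  assumes "t > 0" shows "(psi k has_real_derivative psi (Suc k) t) (at t)"
proof -
  have "((\<lambda>t. poly (PP k) (inverse t) * exp (- inverse t)) has_real_derivative
      poly (pderiv (PP k)) (inverse t) * (- inverse (t^2)) * exp (- inverse t)
      + poly (PP k) (inverse t) * (exp (- inverse t) * (inverse (t^2)))) (at t)"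
    using assms
    by (auto intro!: derivative_eq_intros simp: power2_eq_square field_simps)
  moreover have "poly (pderiv (PP k)) (inverse t) * (- inverse (t^2)) * exp (- inverse t)
      + poly (PP k) (inverse t) * (exp (- inverse t) * (inverse (t^2))) = psi (Suc k) t"
    using assms by (simp add: psi_def algebra_simps power2_eq_square)
  ultimately have d: "((\<lambda>t. poly (PP k) (inverse t) * exp (- inverse t)) has_real_derivative psi (Suc k) t) (at t)"
    by simp
  show ?thesis
    apply (rule has_field_derivative_transform_within_open[OF d, of "{0<..}"])
    using assms by (auto simp: psi_def)
qed

lemma psi_deriv_neg:
  assumes "t < 0" shows "(psi k has_real_derivative psi (Suc k) t) (at t)"
proof -
  have d: "((\<lambda>t. 0) has_real_derivative psi (Suc k) t) (at t)" using assms by (simp add: psi_def)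
  show ?thesis
    apply (rule has_field_derivative_transform_within_open[OF d, of "{..<0}"])
    using assms by (auto simp: psi_def)
qed

lemma psi_deriv0: "(psi k has_real_derivative psi (Suc k) 0) (at 0)"
proof -
  have r: "((\<lambda>y. (psi k y - psi k 0) / (y - 0)) \<longlongrightarrow> 0) (at_right 0)"
  proof -
    have "((\<lambda>t. poly ([:0,1:] * PP k) (inverse t) * exp (- inverse t)) \<longlongrightarrow> (0::real)) (at_right 0)"
      by (rule poly_exp_lim0)
    then show ?thesis
      apply (rule Lim_transform_eventually)
      apply (simp add: eventually_at_right_field)
      apply (rule exI[of _ 1])
      by (auto simp: psi_def field_simps)
  qed
  have l: "((\<lambda>y. (psi k y - psi k 0) / (y - 0)) \<longlongrightarrow> 0) (at_left 0)"
    apply (rule Lim_transform_eventually[OF tendsto_const[of 0]])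
    apply (simp add: eventually_at_left_field)
    apply (rule exI[of _ "-1"])
    by (auto simp: psi_def)
  have "((\<lambda>y. (psi k y - psi k 0) / (y - 0)) \<longlongrightarrow> 0) (at 0)"
    using r l by (simp add: filterlim_split_at_real)
  then show ?thesis by (simp add: has_field_derivative_iff psi_def)
qed

lemma psi_deriv: "(psi k has_real_derivative psi (Suc k) t) (at t)"
  using psi_deriv_pos psi_deriv_neg psi_deriv0 by (metis linorder_neqE_linordered_idom)

lemma psi_nonneg: "psi 0 t \<ge> 0" by (simp add: psi_def)
lemma psi_pos: "t > 0 \<Longrightarrow> psi 0 t > 0" by (simp add: psi_def)
lemma psi_zero: "t \<le> 0 \<Longrightarrow> psi k t = 0" by (simp add: psi_def)

lemma pd_eq: "(f has_derivative D) (at x) \<Longrightarrow> pd i f x = D (axis i 1)"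
  by (simp add: pd_def frechet_derivative_at[symmetric])

lemma fdw: "f differentiable (at x) \<Longrightarrow> (f has_derivative frechet_derivative f (at x)) (at x)"
  using frechet_derivative_works by blast

lemma pd_fdw: "f differentiable (at x) \<Longrightarrow> frechet_derivative f (at x) (axis i 1) = pd i f x"
  by (simp add: pd_def)

lemma pd_const[simp]: "pd i (\<lambda>x. c) x = 0"
  by (simp add: pd_def)

lemma pd_coord[simp]: "pd i (\<lambda>x::real^'n::finite. x $ j) x = (if j = i then 1 else 0)"
proof -
  have "((\<lambda>x::real^'n. x $ j) has_derivative (\<lambda>h. h $ j)) (at x)"
    by (rule bounded_linear_imp_has_derivative) (rule bounded_linear_vec_nth)
  then show ?thesis by (simp add: pd_eq axis_def)
qed

lemma pd_add:
  "f differentiable (at x) \<Longrightarrow> g differentiable (at x) \<Longrightarrow>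
   pd i (\<lambda>x. f x + g x) x = pd i f x + pd i g x"
  by (metis (no_types) pd_eq[OF has_derivative_add[OF fdw fdw]] pd_def)

lemma pd_mult:
  fixes f g :: "real^'n::finite \<Rightarrow> real"
  shows "f differentiable (at x) \<Longrightarrow> g differentiable (at x) \<Longrightarrow>
   pd i (\<lambda>x. f x * g x) x = f x * pd i g x + pd i f x * g x"
  by (metis (no_types) pd_eq[OF has_derivative_mult[OF fdw fdw]] pd_def)

lemma pd_chain:
  fixes f :: "real^'n::finite \<Rightarrow> real"
  assumes "f differentiable (at x)" "(h has_real_derivative h') (at (f x))"
  shows "pd i (\<lambda>x. h (f x)) x = h' * pd i f x"
proof -
  have "((\<lambda>x. h (f x)) has_derivative (\<lambda>v. h' * frechet_derivative f (at x) v)) (at x)"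
    using has_derivative_compose[OF fdw[OF assms(1)] has_field_derivative_imp_has_derivative[OF assms(2)]]
    by simp
  from pd_eq[OF this] show ?thesis by (simp add: pd_def)
qed

lemma diff_chain:
  fixes f :: "real^'n::finite \<Rightarrow> real"
  assumes "f differentiable (at x)" "(h has_real_derivative h') (at (f x))"
  shows "(\<lambda>x. h (f x)) differentiable (at x)"
  using has_derivative_compose[OF fdw[OF assms(1)] has_field_derivative_imp_has_derivative[OF assms(2)]]
  by (auto simp: differentiable_def)

inductive sm :: "(real^'n::finite \<Rightarrow> real) \<Rightarrow> bool" where
  sm_const: "sm (\<lambda>x. c)"
| sm_coord: "sm (\<lambda>x. x $ j)"
| sm_add: "sm f \<Longrightarrow> sm g \<Longrightarrow> sm (\<lambda>x. f x + g x)"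
| sm_mult: "sm f \<Longrightarrow> sm g \<Longrightarrow> sm (\<lambda>x. f x * g x)"
| sm_psi: "sm f \<Longrightarrow> sm (\<lambda>x. psi k (f x))"
| sm_exp: "sm f \<Longrightarrow> sm (\<lambda>x. exp (f x))"

lemma sm_main: "sm f \<Longrightarrow> (\<forall>x. f differentiable (at x)) \<and> (\<forall>i. sm (pd i f))"
proof (induction rule: sm.induct)
  case (sm_const c)
  then show ?case by (auto intro: sm.intros)
next
  case (sm_coord j)
  have "(\<lambda>x::real^'a. x $ j) differentiable (at x)" for x
    using bounded_linear_imp_differentiable[OF bounded_linear_vec_nth] by blast
  moreover have "sm (pd i (\<lambda>x::real^'a. x $ j))" for i
  proof -
    have "pd i (\<lambda>x::real^'a. x $ j) = (\<lambda>x. if j = i then 1 else 0)" by auto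
    then show ?thesis by (simp add: sm.intros)
  qed
  ultimately show ?case by blast
next
  case (sm_add f g)
  have "pd i (\<lambda>x. f x + g x) = (\<lambda>x. pd i f x + pd i g x)" for i
    using sm_add pd_add by blast
  then show ?case using sm_add by (auto intro: sm.intros)
next
  case (sm_mult f g)
  have "pd i (\<lambda>x. f x * g x) = (\<lambda>x. f x * pd i g x + pd i f x * g x)" for i
    using sm_mult pd_mult by blast
  then show ?case using sm_mult by (auto intro!: sm.intros)
next
  case (sm_psi f k)
  have "pd i (\<lambda>x. psi k (f x)) = (\<lambda>x. psi (Suc k) (f x) * pd i f x)" for i
    using sm_psi pd_chain psi_deriv by blast
  moreover have "(\<lambda>x. psi k (f x)) differentiable (at x)" for x
    using sm_psi diff_chain psi_deriv by blast
  ultimately show ?case using sm_psi by (auto intro!: sm.intros)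
next
  case (sm_exp f)
  have "pd i (\<lambda>x. exp (f x)) = (\<lambda>x. exp (f x) * pd i f x)" for i
    using sm_exp pd_chain DERIV_exp by blast
  moreover have "(\<lambda>x. exp (f x)) differentiable (at x)" for x
    using sm_exp diff_chain DERIV_exp by blast
  ultimately show ?case using sm_exp by (auto intro!: sm.intros)
qed

lemma sm_diff: "sm f \<Longrightarrow> f differentiable (at x)"
  using sm_main by blast

lemma sm_pd: "sm f \<Longrightarrow> sm (pd i f)"
  using sm_main by blast

lemma sm_cont: "sm f \<Longrightarrow> continuous_on UNIV f"
  by (meson continuous_at_imp_continuous_on differentiable_imp_continuous_within sm_diff)

lemma sm_C1: "sm f \<Longrightarrow> C1 f"
  by (simp add: C1_def sm_diff sm_cont sm_pd)

lemma sm_smooth: "sm f \<Longrightarrow> smooth f"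
proof -
  assume "sm f"
  have "sm (iter_pd is f)" for "is"
    by (induction "is") (auto simp: \<open>sm f\<close> sm_pd)
  then show ?thesis by (simp add: smooth_def sm_diff)
qed

lemma sm_sum: "finite F \<Longrightarrow> (\<And>j. j \<in> F \<Longrightarrow> sm (g j)) \<Longrightarrow> sm (\<lambda>x. \<Sum>j\<in>F. g j x)"
  by (induction F rule: finite_induct) (auto intro: sm.intros)

lemma sm_sum': "(\<And>j. sm (g j)) \<Longrightarrow> sm (\<lambda>x. \<Sum>j\<in>F. g j x)"
  by (cases "finite F") (auto intro: sm_sum sm.intros)

lemma sm_diff': "sm f \<Longrightarrow> sm g \<Longrightarrow> sm (\<lambda>x. f x - g x)"
proof -
  assume "sm f" "sm g"
  then have "sm (\<lambda>x. f x + (-1) * g x)" by (intro sm_add sm_mult sm_const)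
  moreover have "(\<lambda>x. f x + (-1) * g x) = (\<lambda>x. f x - g x)" by simp
  ultimately show ?thesis by metis
qed

lemma cont_bounded_on:
  fixes h :: "real^'n::finite \<Rightarrow> real"
  assumes "continuous_on UNIV h"
  shows "\<exists>M\<ge>0. \<forall>x\<in>cball 0 R. \<bar>h x\<bar> \<le> M"
proof -
  have "compact (h ` cball 0 R)"
    by (rule compact_continuous_image) (auto intro: continuous_on_subset[OF assms])
  then obtain M where "\<forall>y\<in>h ` cball 0 R. norm y \<le> M"
    using compact_imp_bounded bounded_iff by metis
  then show ?thesis
    by (intro exI[of _ "max M 0"]) force
qed

lemma cont_supp_bound:
  fixes h :: "real^'n::finite \<Rightarrow> real"
  assumes "continuous_on UNIV h" "\<forall>x. R < norm x \<longrightarrow> h x = 0"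
  shows "\<exists>M\<ge>0. \<forall>x. \<bar>h x\<bar> \<le> M"
proof -
  obtain M where M: "M \<ge> 0" "\<forall>x\<in>cball 0 R. \<bar>h x\<bar> \<le> M"
    using cont_bounded_on[OF assms(1)] by blast
  have "\<bar>h x\<bar> \<le> M" for x
    using M assms(2) by (cases "R < norm x") auto
  then show ?thesis using M by blast
qed

lemma cont_meas: "continuous_on UNIV (h :: real^'n::finite \<Rightarrow> real) \<Longrightarrow> h \<in> borel_measurable lborel"
  by (simp add: borel_measurable_continuous_onI)

lemma cont_supp_integrable:
  fixes h :: "real^'n::finite \<Rightarrow> real"
  assumes "continuous_on UNIV h" "\<forall>x. R < norm x \<longrightarrow> h x = 0"
  shows "integrable lborel h"
proof -
  obtain M where M: "M \<ge> 0" "\<forall>x\<in>cball 0 R. \<bar>h x\<bar> \<le> M"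
    using cont_bounded_on[OF assms(1)] by blast
  have fin: "emeasure lborel (cball (0::real^'n) R) < \<infinity>"
    by (rule emeasure_bounded_finite) simp
  have i1: "integrable lborel (\<lambda>x::real^'n. M * indicator (cball 0 R) x)"
    using fin by (intro integrable_mult_right integrable_real_indicator) auto
  show ?thesis
  proof (rule Bochner_Integration.integrable_bound[OF i1 cont_meas[OF assms(1)]], rule AE_I2)
    fix x :: "real^'n"
    show "norm (h x) \<le> norm (M * indicator (cball 0 R) x)"
      using M assms(2) by (cases "x \<in> cball 0 R") (auto simp: indicator_def)
  qed
qed

lemma pd_supp:
  fixes f :: "real^'n::finite \<Rightarrow> real"
  assumes "\<forall>x. R < norm x \<longrightarrow> f x = 0" "R < norm x"
  shows "pd i f x = 0"
proof -
  have "((\<lambda>x. 0) has_derivative (\<lambda>h. 0)) (at x)" by simp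
  then have "(f has_derivative (\<lambda>h. 0)) (at x)"
  proof (rule has_derivative_transform_within_open)
    show "open {y::real^'n. R < norm y}" by (intro open_Collect_less continuous_intros)
  qed (use assms in auto)
  then show ?thesis by (simp add: pd_eq)
qed

lemma line_deriv:
  fixes g :: "real^'n::finite \<Rightarrow> real"
  assumes "\<forall>x. g differentiable (at x)"
  shows "((\<lambda>s. g (x + s *\<^sub>R axis k 1)) has_real_derivative pd k g (x + s *\<^sub>R axis k 1)) (at s)"
proof -
  let ?y = "x + s *\<^sub>R axis k 1"
  have l: "((\<lambda>s. x + s *\<^sub>R axis k (1::real)) has_derivative (\<lambda>h. h *\<^sub>R axis k 1)) (at s)"
    by (auto intro!: derivative_eq_intros)
  have d: "(g has_derivative frechet_derivative g (at ?y)) (at ?y)"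
    using assms fdw by blast
  have lin: "linear (frechet_derivative g (at ?y))"
    using d has_derivative_linear by blast
  have "((\<lambda>s. g (x + s *\<^sub>R axis k 1)) has_derivative (\<lambda>h. frechet_derivative g (at ?y) (h *\<^sub>R axis k 1))) (at s)"
    using has_derivative_compose[OF l d] by simp
  then show ?thesis
    apply (rule has_derivative_imp_has_field_derivative)
    using lin by (simp add: pd_def linear_cmul)
qed

lemma ibp0:
  fixes g :: "real^'n::finite \<Rightarrow> real"
  assumes dg: "\<forall>x. g differentiable (at x)" and cg: "continuous_on UNIV (pd k g)"
    and sg: "\<forall>x. R < norm x \<longrightarrow> g x = 0"
  shows "integral\<^sup>L lborel (pd k g) = 0"
proof -
  define e where "e = axis k (1::real)"
  define t where "t n = inverse (real (Suc n))" for n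
  define F where "F n x = (g (x + t n *\<^sub>R e) - g x) / t n" for n x
  have tpos: "0 < t n" "t n \<le> 1" for n by (auto simp: t_def field_simps)
  have contg: "continuous_on UNIV g"
    by (meson continuous_at_imp_continuous_on differentiable_imp_continuous_within dg)
  have Rnn: "R \<ge> 0 \<or> (\<forall>x. g x = 0)"
    using sg by (metis le_less_trans norm_ge_zero not_le)
  have spd: "\<forall>x. R < norm x \<longrightarrow> pd k g x = 0"
    using pd_supp[OF sg] by blast
  obtain M where M: "M \<ge> 0" "\<forall>x. \<bar>pd k g x\<bar> \<le> M"
    using cont_supp_bound[OF cg spd] by blast
  have cshift: "continuous_on UNIV (\<lambda>x. g (c + x))" for c
    by (rule continuous_on_compose2[OF contg]) (auto intro: continuous_intros)
  have ishift: "integrable lborel (\<lambda>x. g (c + x))" for c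
  proof (rule cont_supp_integrable[OF cshift, where R="R + norm c"], intro allI impI)
    fix x :: "real^'n" assume "R + norm c < norm x"
    moreover have "norm x \<le> norm (c + x) + norm c"
      by (metis add.commute add_diff_cancel_left' norm_triangle_ineq4 )
    ultimately show "g (c + x) = 0" using sg by auto
  qed
  have shift_int: "integral\<^sup>L lborel (\<lambda>x. g (c + x)) = integral\<^sup>L lborel g" for c
  proof -
    have "integral\<^sup>L lborel g = integral\<^sup>L (distr lborel borel ((+) c)) g"
      by (simp add: lborel_distr_plus)
    also have "\<dots> = integral\<^sup>L lborel (\<lambda>x. g (c + x))"
      by (rule integral_distr) (auto intro: cont_meas[OF contg] continuous_intros borel_measurable_continuous_onI simp: contg borel_measurable_continuous_onI)
    finally show ?thesis by simp
  qed
  have F0: "integral\<^sup>L lborel (F n) = 0" for n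
  proof -
    have "integral\<^sup>L lborel (F n) = (integral\<^sup>L lborel (\<lambda>x. g (t n *\<^sub>R e + x)) - integral\<^sup>L lborel g) / t n"
      unfolding F_def
      using ishift[of "t n *\<^sub>R e"] ishift[of 0]
      by (simp add: integral_diff add.commute)
    then show ?thesis by (simp add: shift_int)
  qed
  have Fmeas: "F n \<in> borel_measurable lborel" for n
    unfolding F_def
    by (intro borel_measurable_divide borel_measurable_diff cont_meas contg)
       (use cshift[of "t n *\<^sub>R e"] in \<open>simp_all add: add.commute\<close>)
  have lim: "(\<lambda>n. F n x) \<longlonglongrightarrow> pd k g x" for x
  proof -
    have "((\<lambda>s. g (x + s *\<^sub>R e)) has_real_derivative pd k g (x + 0 *\<^sub>R e)) (at 0)"
      unfolding e_def by (rule line_deriv[OF dg])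
    then have "((\<lambda>y. (g (x + y *\<^sub>R e) - g (x + 0 *\<^sub>R e)) / (y - 0)) \<longlongrightarrow> pd k g x) (at 0)"
      by (simp add: has_field_derivative_iff)
    moreover have "filterlim t (at 0) sequentially"
    proof -
      have t0: "t \<longlonglongrightarrow> 0" unfolding t_def[abs_def] by (rule LIMSEQ_inverse_real_of_nat)
      show ?thesis unfolding filterlim_at using t0 tpos(1) by (auto intro!: always_eventually) (metis less_irrefl)
    qed
    ultimately have "((\<lambda>n. (g (x + t n *\<^sub>R e) - g (x + 0 *\<^sub>R e)) / (t n - 0)) \<longlongrightarrow> pd k g x) sequentially"
      by (rule filterlim_compose)
    then show ?thesis by (simp add: F_def)
  qed
  have bound: "norm (F n x) \<le> M * indicator (cball 0 (R + 1)) x" for n x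
  proof (cases "x \<in> cball 0 (R + 1)")
    case True
    obtain z where "0 < z" "z < t n"
      "g (x + t n *\<^sub>R e) - g (x + 0 *\<^sub>R e) = (t n - 0) * pd k g (x + z *\<^sub>R e)"
      using MVT2[OF tpos(1)[of n], where f="\<lambda>s. g (x + s *\<^sub>R e)" and f'="\<lambda>s. pd k g (x + s *\<^sub>R e)"]
        line_deriv[OF dg] unfolding e_def by blast
    then have "F n x = pd k g (x + z *\<^sub>R e)"
      using tpos(1)[of n] by (simp add: F_def)
    then show ?thesis using True M by simp
  next
    case False
    then have nx: "R + 1 < norm x" by simp
    have "norm x \<le> norm (x + t n *\<^sub>R e) + t n"
      using norm_triangle_ineq4[of "x + t n *\<^sub>R e" "t n *\<^sub>R e"] tpos(1)[of n]
      by (simp add: e_def)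
    then have "R < norm (x + t n *\<^sub>R e)" using nx tpos(2)[of n] by linarith
    then show ?thesis using False nx sg by (simp add: F_def)
  qed
  have fin: "emeasure lborel (cball (0::real^'n) (R + 1)) < \<infinity>"
    by (rule emeasure_bounded_finite) simp
  have iw: "integrable lborel (\<lambda>x::real^'n. M * indicator (cball 0 (R + 1)) x)"
    using fin by (intro integrable_mult_right integrable_real_indicator) auto
  have "(\<lambda>n. integral\<^sup>L lborel (F n)) \<longlonglongrightarrow> integral\<^sup>L lborel (pd k g)"
    by (rule integral_dominated_convergence[OF cont_meas[OF cg] Fmeas iw])
       (use lim bound in auto)
  then show ?thesis using F0 by (simp add: LIMSEQ_const_iff)
qed

lemma C1_cont: "C1 f \<Longrightarrow> continuous_on UNIV f"
  by (meson C1_def continuous_at_imp_continuous_on differentiable_imp_continuous_within)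

lemma ibp:
  fixes u v :: "real^'n::finite \<Rightarrow> real"
  assumes u: "C1 u" and v: "C1 v" and su: "\<forall>x. R < norm x \<longrightarrow> u x = 0"
  shows "integrable lborel (\<lambda>x. pd k u x * v x)"
    and "integrable lborel (\<lambda>x. u x * pd k v x)"
    and "integral\<^sup>L lborel (\<lambda>x. pd k u x * v x) = - integral\<^sup>L lborel (\<lambda>x. u x * pd k v x)"
proof -
  have du: "\<forall>x. u differentiable (at x)" and dv: "\<forall>x. v differentiable (at x)"
    using u v by (auto simp: C1_def)
  have cu: "continuous_on UNIV u" and cv: "continuous_on UNIV v"
    using u v C1_cont by auto
  have cpu: "continuous_on UNIV (pd k u)" and cpv: "continuous_on UNIV (pd k v)"
    using u v by (auto simp: C1_def)
  have spu: "\<forall>x. R < norm x \<longrightarrow> pd k u x = 0"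
    using pd_supp[OF su] by blast
  show i1: "integrable lborel (\<lambda>x. pd k u x * v x)"
    by (rule cont_supp_integrable[where R=R]) (use spu cpu cv in \<open>auto intro: continuous_intros\<close>)
  show i2: "integrable lborel (\<lambda>x. u x * pd k v x)"
    by (rule cont_supp_integrable[where R=R]) (use su cu cpv in \<open>auto intro: continuous_intros\<close>)
  define g where "g x = u x * v x" for x
  have pg: "pd k g = (\<lambda>x. u x * pd k v x + pd k u x * v x)"
    unfolding g_def[abs_def] using pd_mult du dv by blast
  have dg: "\<forall>x. g differentiable (at x)"
    using du dv unfolding g_def[abs_def] by (auto intro: differentiable_mult)
  have "integral\<^sup>L lborel (pd k g) = 0"
    by (rule ibp0[OF dg, where R=R]) (use su cu cv cpu cpv in \<open>auto simp: pg g_def intro!: continuous_intros\<close>)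
  then have "integral\<^sup>L lborel (\<lambda>x. u x * pd k v x) + integral\<^sup>L lborel (\<lambda>x. pd k u x * v x) = 0"
    using i1 i2 by (simp add: pg)
  then show "integral\<^sup>L lborel (\<lambda>x. pd k u x * v x) = - integral\<^sup>L lborel (\<lambda>x. u x * pd k v x)"
    by linarith
qed

definition bump :: "real^'n::finite \<Rightarrow> real \<Rightarrow> real^'n \<Rightarrow> real" where
  "bump c r x = psi 0 (r^2 - (norm (x - c))^2)"

lemma bump_sm: "sm (bump c r)"
proof -
  have eq: "bump c r = (\<lambda>x. psi 0 (r^2 - (\<Sum>j\<in>UNIV. (x$j - c$j) * (x$j - c$j))))"
    by (auto simp: bump_def fun_eq_iff power2_norm_eq_inner inner_vec_def)
  show ?thesis unfolding eq
    by (intro sm_psi sm_diff' sm_const sm_sum' sm_mult sm_coord)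
qed

lemma bump_nonneg: "bump c r x \<ge> 0"
  by (simp add: bump_def psi_nonneg)

lemma bump_zero: "\<bar>r\<bar> \<le> norm (x - c) \<Longrightarrow> bump c r x = 0"
proof -
  assume a: "\<bar>r\<bar> \<le> norm (x - c)"
  have "\<bar>r\<bar>^2 \<le> (norm (x - c))^2" using power_mono[OF a abs_ge_zero] .
  then have "r^2 \<le> (norm (x - c))^2" by simp
  then show ?thesis by (simp add: bump_def psi_zero)
qed

lemma bump_pos: "r > 0 \<Longrightarrow> bump c r c > 0"
  by (simp add: bump_def psi_pos)

lemma bump_supp: fixes c :: "real^'n::finite" shows "\<forall>x. norm c + \<bar>r\<bar> < norm x \<longrightarrow> bump c r x = 0"
proof (intro allI impI)
  fix x :: "real^'n" assume "norm c + \<bar>r\<bar> < norm x"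
  then have "\<bar>r\<bar> \<le> norm (x - c)" using norm_triangle_ineq2[of x c] by linarith
  then show "bump c r x = 0" by (rule bump_zero)
qed

lemma supp_test_fun:
  fixes f :: "real^'n::finite \<Rightarrow> real"
  assumes "smooth f" "\<forall>x. R < norm x \<longrightarrow> f x = 0"
  shows "test_fun f"
proof -
  have "{x. f x \<noteq> 0} \<subseteq> cball 0 R"
  proof
    fix x assume "x \<in> {x. f x \<noteq> 0}"
    then have "\<not> R < norm x" using assms(2) by auto
    then show "x \<in> cball 0 R" by simp
  qed
  then have "bounded {x. f x \<noteq> 0}" using bounded_cball bounded_subset by blast
  then show ?thesis using assms(1) by (simp add: test_fun_def compact_closure)
qed

lemma bump_test: "test_fun (bump c r)"
  by (rule supp_test_fun[OF sm_smooth[OF bump_sm] bump_supp])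

lemma test_supp:
  fixes f :: "real^'n::finite \<Rightarrow> real"
  assumes "test_fun f"
  shows "\<exists>R. \<forall>x. R < norm x \<longrightarrow> f x = 0"
proof -
  have "bounded (closure {x. f x \<noteq> 0})" using assms by (simp add: test_fun_def compact_imp_bounded)
  then obtain R where "\<forall>x\<in>closure {x. f x \<noteq> 0}. norm x \<le> R" by (auto simp: bounded_iff)
  then have "\<forall>x. R < norm x \<longrightarrow> f x = 0"
    by (metis (mono_tags, lifting) closure_subset mem_Collect_eq not_le subsetD)
  then show ?thesis by blast
qed

lemma test_C1:
  assumes "test_fun f" shows "C1 f" and "C1 (pd i f)"
proof -
  have s: "\<forall>is x. iter_pd is f differentiable (at x)"
    using assms by (simp add: test_fun_def smooth_def)
  have d0: "\<forall>x. f differentiable (at x)" using s[rule_format, of "[]"] by simp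
  have d1: "\<forall>x. pd j f differentiable (at x)" for j using s[rule_format, of "[j]"] by simp
  have d2: "\<forall>x. pd j (pd i f) differentiable (at x)" for j using s[rule_format, of "[j,i]"] by simp
  have cont: "(\<forall>x. h differentiable (at x)) \<Longrightarrow> continuous_on UNIV h" for h :: "real^'a \<Rightarrow> real"
    by (meson continuous_at_imp_continuous_on differentiable_imp_continuous_within)
  show "C1 f" using d0 d1 cont by (simp add: C1_def)
  show "C1 (pd i f)" using d1 d2 cont by (simp add: C1_def)
qed

lemma pos_int:
  fixes p :: "real^'n::finite \<Rightarrow> real"
  assumes cp: "continuous_on UNIV p" and nn: "\<forall>x. p x \<ge> 0" and pc: "p c > 0"
    and ip: "integrable lborel p"
  shows "integral\<^sup>L lborel p > 0"
proof -
  have "isCont p c" using cp by (simp add: continuous_on_eq_continuous_at)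
  then obtain d where d: "d > 0" "\<forall>y. dist y c < d \<longrightarrow> dist (p y) (p c) < p c / 2"
    using pc unfolding continuous_at_eps_delta by (metis half_gt_zero)
  have fin: "emeasure lborel (ball c d) < \<infinity>"
    by (rule emeasure_bounded_finite) simp
  have ii: "integrable lborel (\<lambda>x. p c / 2 * indicator (ball c d) x)"
    using fin by (intro integrable_mult_right integrable_real_indicator) auto
  have le: "p c / 2 * indicator (ball c d) x \<le> p x" for x
  proof (cases "x \<in> ball c d")
    case True
    then have "dist x c < d" by (simp add: dist_commute)
    then have "dist (p x) (p c) < p c / 2" using d(2) by blast
    then have "\<bar>p x - p c\<bar> < p c / 2" by (simp only: dist_real_def)
    then have "p c / 2 \<le> p x" by arith
    then show ?thesis using True by simp
  qed (use nn in auto)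
  have "integral\<^sup>L lborel (\<lambda>x. p c / 2 * indicator (ball c d) x) \<le> integral\<^sup>L lborel p"
    by (rule integral_mono[OF ii ip le])
  moreover have "integral\<^sup>L lborel (\<lambda>x. p c / 2 * indicator (ball c d) x) = p c / 2 * measure lborel (ball c d)"
    using fin by (simp add: measure_def)
  moreover have "measure lborel (ball c d) > 0"
    using d(1) content_ball_gt_0_iff by blast
  moreover have "p c / 2 * measure lborel (ball c d) > 0" using pc \<open>measure lborel (ball c d) > 0\<close> by simp
  ultimately show ?thesis by linarith
qed

lemma fund:
  fixes q :: "real^'n::finite \<Rightarrow> real"
  assumes cq: "continuous_on UNIV q"
    and h: "\<forall>f. test_fun f \<longrightarrow> integral\<^sup>L lborel (\<lambda>x. f x * q x) = 0"
  shows "q x = 0"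
proof (rule ccontr)
  assume qx: "q x \<noteq> 0"
  have "isCont q x" using cq by (simp add: continuous_on_eq_continuous_at)
  then obtain r where r: "r > 0" "\<forall>y. dist y x < r \<longrightarrow> dist (q y) (q x) < \<bar>q x\<bar>"
    using qx unfolding continuous_at_eps_delta by (metis zero_less_abs_iff)
  have pos: "q y * q x > 0" if "dist y x < r" for y
  proof -
    have "\<bar>q y - q x\<bar> < \<bar>q x\<bar>" using r that by (simp add: dist_real_def)
    then have "(q x > 0 \<and> q y > 0) \<or> (q x < 0 \<and> q y < 0)" using qx by (auto simp: abs_if split: if_splits)
    then show ?thesis by (auto intro: mult_pos_pos mult_neg_neg)
  qed
  define p where "p y = bump x r y * (q y * q x)" for y
  have cb: "continuous_on UNIV (bump x r)" by (rule sm_cont[OF bump_sm])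
  have cp: "continuous_on UNIV p" unfolding p_def[abs_def]
    by (intro continuous_intros cb cq)
  have nn: "\<forall>y. p y \<ge> 0"
  proof
    fix y show "p y \<ge> 0"
    proof (cases "dist y x < r")
      case True show ?thesis unfolding p_def by (rule mult_nonneg_nonneg[OF bump_nonneg less_imp_le[OF pos[OF True]]])
    next
      case False then have "\<bar>r\<bar> \<le> norm (y - x)" using r(1) by (simp add: dist_norm)
      then show ?thesis by (simp add: p_def bump_zero)
    qed
  qed
  have px: "p x > 0" unfolding p_def by (rule mult_pos_pos[OF bump_pos[OF r(1)] pos]) (simp add: r(1))
  have ip: "integrable lborel p"
    by (rule cont_supp_integrable[OF cp, where R="norm x + \<bar>r\<bar>"]) (use bump_supp[of x r] in \<open>simp add: p_def\<close>)
  have "integral\<^sup>L lborel p > 0" by (rule pos_int[OF cp nn px ip])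
  moreover have "integral\<^sup>L lborel p = integral\<^sup>L lborel (\<lambda>y. bump x r y * q y) * q x"
    unfolding p_def[abs_def] mult.assoc[symmetric] by (rule integral_mult_left_zero)
  moreover have "integral\<^sup>L lborel (\<lambda>y. bump x r y * q y) = 0"
    using h bump_test by blast
  ultimately show False by simp
qed

lemma delta_mult: "(if i = a then 1 else 0) * (t::real) = (if i = a then t else 0)"
  by simp

lemma bil_axis:
  fixes m :: "'n::finite \<Rightarrow> 'n \<Rightarrow> real"
  shows "(\<Sum>a'\<in>UNIV. \<Sum>b'\<in>UNIV. (axis a 1 :: real^'n) $ a' * (axis b 1 :: real^'n) $ b' * m a' b') = m a b"
proof -
  have "(\<Sum>a'\<in>UNIV. \<Sum>b'\<in>UNIV. (axis a 1 :: real^'n) $ a' * (axis b 1 :: real^'n) $ b' * m a' b')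
     = (\<Sum>a'\<in>UNIV. (axis a 1 :: real^'n) $ a' * (\<Sum>b'\<in>UNIV. (axis b 1 :: real^'n) $ b' * m a' b'))"
    by (simp add: sum_distrib_left mult.assoc)
  also have "\<dots> = m a b"
    by (simp add: axis_def delta_mult)
  finally show ?thesis .
qed

lemma quad_split:
  fixes m :: "'n::finite \<Rightarrow> 'n \<Rightarrow> real"
  shows "(\<Sum>a\<in>UNIV. \<Sum>b\<in>UNIV. (x + y) $ a * (x + y) $ b * m a b) =
    (\<Sum>a\<in>UNIV. \<Sum>b\<in>UNIV. x $ a * x $ b * m a b) + (\<Sum>a\<in>UNIV. \<Sum>b\<in>UNIV. y $ a * y $ b * m a b)
    + (\<Sum>a\<in>UNIV. \<Sum>b\<in>UNIV. x $ a * y $ b * m a b) + (\<Sum>a\<in>UNIV. \<Sum>b\<in>UNIV. y $ a * x $ b * m a b)"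
  by (simp add: algebra_simps sum.distrib)

lemma QL:
  fixes m :: "'n::finite \<Rightarrow> 'n \<Rightarrow> real"
  shows "(\<forall>x::real^'n. c + (\<Sum>a\<in>UNIV. \<Sum>b\<in>UNIV. x$a * x$b * m a b) = 0) \<longleftrightarrow> c = 0 \<and> (\<forall>a b. m a b + m b a = 0)"
proof
  assume h: "\<forall>x::real^'n. c + (\<Sum>a\<in>UNIV. \<Sum>b\<in>UNIV. x$a * x$b * m a b) = 0"
  let ?Q = "\<lambda>x::real^'n. (\<Sum>a\<in>UNIV. \<Sum>b\<in>UNIV. x$a * x$b * m a b)"
  have c0: "c = 0" using h[rule_format, of 0] by simp
  then have Q0: "?Q x = 0" for x using h by simp
  have "m a b + m b a = 0" for a b
  proof -
    have "?Q (axis a 1 + axis b 1) = ?Q (axis a 1) + ?Q (axis b 1) + m a b + m b a"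
      unfolding quad_split bil_axis by simp
    then show ?thesis using Q0[of "axis a 1 + axis b 1"] Q0[of "axis a 1"] Q0[of "axis b 1"] by linarith
  qed
  then show "c = 0 \<and> (\<forall>a b. m a b + m b a = 0)" using c0 by blast
next
  assume h: "c = 0 \<and> (\<forall>a b. m a b + m b a = 0)"
  have "(\<Sum>a\<in>UNIV. \<Sum>b\<in>UNIV. x$a * x$b * m a b) = 0" for x :: "real^'n"
  proof -
    have "(\<Sum>a\<in>UNIV. \<Sum>b\<in>UNIV. x$a * x$b * m a b) = (\<Sum>b\<in>UNIV. \<Sum>a\<in>UNIV. x$a * x$b * m a b)"
      by (rule sum.swap)
    also have "\<dots> = (\<Sum>a\<in>UNIV. \<Sum>b\<in>UNIV. x$a * x$b * m b a)"
      by (simp add: mult.commute)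
    also have "\<dots> = (\<Sum>a\<in>UNIV. \<Sum>b\<in>UNIV. - (x$a * x$b * m a b))"
      using h by (intro sum.cong refl) (metis add_eq_0_iff mult_minus_right)
    finally show ?thesis by (simp add: sum_negf)
  qed
  then show "\<forall>x::real^'n. c + (\<Sum>a\<in>UNIV. \<Sum>b\<in>UNIV. x$a * x$b * m a b) = 0" using h by simp
qed

lemma mm_entry: "((X::real^'n::finite^'n) ** Y) $ i $ j = (\<Sum>k\<in>UNIV. X$i$k * Y$k$j)"
  by (simp add: matrix_matrix_mult_def)

lemma tr_entry: "transpose (X::real^'n::finite^'n) $ i $ j = X $ j $ i"
  by (simp add: transpose_def)

lemma mv_entry: "((X::real^'n::finite^'n) *v x) $ i = (\<Sum>k\<in>UNIV. X$i$k * x$k)"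
  by (simp add: matrix_vector_mult_def)

lemma sym_entry: "transpose (X::real^'n::finite^'n) = X \<Longrightarrow> X $ i $ j = X $ j $ i"
  by (metis tr_entry)

lemma qf: "(x::real^'n::finite) \<bullet> (M *v x) = (\<Sum>a\<in>UNIV. \<Sum>b\<in>UNIV. x$a * x$b * M$a$b)"
  by (simp add: inner_vec_def mv_entry sum_distrib_left algebra_simps)

lemma dot_sym_mat:
  fixes S M :: "real^'n::finite^'n"
  assumes "transpose S = S"
  shows "(S *v x) \<bullet> (M *v y) = x \<bullet> ((S ** M) *v y)"
proof -
  have "S *v x = x v* S" using assms by (metis transpose_matrix_vector)
  then show ?thesis by (simp add: dot_lmul_matrix matrix_vector_mul_assoc)
qed

lemma QLm:
  fixes M :: "real^'n::finite^'n"
  shows "(\<forall>x::real^'n. c + x \<bullet> (M *v x) = 0) \<longleftrightarrow> c = 0 \<and> (\<forall>a b. M$a$b + M$b$a = 0)"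
  unfolding qf by (rule QL)

lemma sys_form:
  fixes S H :: "real^'n::finite^'n"
  assumes sS: "transpose S = S"
  shows "(\<forall>a b. (S ** H)$a$b + (S ** H)$b$a = 0) \<longleftrightarrow>
         (\<forall>j k. (\<Sum>i\<in>UNIV. S$i$j * H$i$k + S$i$k * H$i$j) = 0)"
proof -
  have "(S ** H)$a$b + (S ** H)$b$a = (\<Sum>i\<in>UNIV. S$i$a * H$i$b + S$i$b * H$i$a)" for a b
    by (simp add: mm_entry sum.distrib sym_entry[OF sS, of a] sym_entry[OF sS, of b])
  then show ?thesis by simp
qed

lemma sys_form2:
  fixes S H :: "real^'n::finite^'n"
  shows "(\<forall>j k. (\<Sum>i\<in>UNIV. S$i$j * H$i$k + S$i$k * H$i$j) = 0) \<longleftrightarrow>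
    ((\<forall>j. (\<Sum>i\<in>UNIV. S$i$j * H$i$j) = 0)
     \<and> (\<forall>j k. j \<noteq> k \<longrightarrow> (\<Sum>i\<in>UNIV. S$i$j * H$i$k + S$i$k * H$i$j) = 0))"
proof -
  have "(\<Sum>i\<in>UNIV. S$i$j * H$i$j + S$i$j * H$i$j) = 2 * (\<Sum>i\<in>UNIV. S$i$j * H$i$j)" for j
    by (simp only: sum.distrib mult_2)
  note eq = this
  show ?thesis
  proof (intro iffI conjI allI impI)
    fix j :: 'n assume h: "\<forall>j k. (\<Sum>i\<in>UNIV. S$i$j * H$i$k + S$i$k * H$i$j) = 0"
    show "(\<Sum>i\<in>UNIV. S$i$j * H$i$j) = 0" using h[rule_format, of j j] eq[of j] by linarith
  next
    fix j k :: 'n assume "\<forall>j k. (\<Sum>i\<in>UNIV. S$i$j * H$i$k + S$i$k * H$i$j) = 0" "j \<noteq> k"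
    then show "(\<Sum>i\<in>UNIV. S$i$j * H$i$k + S$i$k * H$i$j) = 0" by blast
  next
    fix j k :: 'n assume h: "(\<forall>j. (\<Sum>i\<in>UNIV. S$i$j * H$i$j) = 0)
     \<and> (\<forall>j k. j \<noteq> k \<longrightarrow> (\<Sum>i\<in>UNIV. S$i$j * H$i$k + S$i$k * H$i$j) = 0)"
    show "(\<Sum>i\<in>UNIV. S$i$j * H$i$k + S$i$k * H$i$j) = 0"
    proof (cases "j = k")
      case True then show ?thesis using h eq[of j] by simp
    next
      case False then show ?thesis using h by blast
    qed
  qed
qed

lemma mat_sub_ldistrib:
  fixes X Y S :: "real^'n::finite^'n"
  shows "S ** (X - Y) = S ** X - S ** Y"
proof -
  have "S ** ((X - Y) + Y) = S ** (X - Y) + S ** Y" by (rule matrix_add_ldistrib)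
  then have "S ** X = S ** (X - Y) + S ** Y" by (simp only: diff_add_cancel)
  then show ?thesis unfolding eq_diff_eq by (rule sym)
qed

lemma mat_eq_iff: "(X::real^'n::finite^'n) = Y \<longleftrightarrow> (\<forall>a b. X$a$b = Y$a$b)"
  by (metis vec_eq_iff)

lemma cond_H:
  fixes A G S :: "real^'n::finite^'n"
  assumes sA: "transpose A = A" and sS: "transpose S = S"
  shows "(S ** G + transpose G ** S = 2 *\<^sub>R (S ** A ** S)) \<longleftrightarrow>
         (\<forall>a b. (S ** (G - A ** S))$a$b + (S ** (G - A ** S))$b$a = 0)"
proof -
  have e1: "(S ** (G - A ** S))$a$b = (S ** G)$a$b - (S ** A ** S)$a$b" for a b
  proof -
    have "S ** (G - A ** S) = S ** G - S ** A ** S"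
      by (simp add: mat_sub_ldistrib matrix_mul_assoc)
    then show ?thesis by simp
  qed
  have sas: "(S ** A ** S)$b$a = (S ** A ** S)$a$b" for a b
  proof -
    have "transpose (S ** A ** S) = S ** A ** S"
      by (simp add: matrix_transpose_mul sA sS matrix_mul_assoc)
    then show ?thesis by (metis sym_entry)
  qed
  have sg: "(S ** G)$b$a = (transpose G ** S)$a$b" for a b
    by (simp add: mm_entry tr_entry sym_entry[OF sS, of b] mult.commute)
  have key: "(S ** (G - A ** S))$a$b + (S ** (G - A ** S))$b$a
     = (S ** G)$a$b + (transpose G ** S)$a$b - 2 * (S ** A ** S)$a$b" for a b
    using e1[of a b] e1[of b a] sas[of a b] sg[of b a] by linarith
  have "(S ** G + transpose G ** S = 2 *\<^sub>R (S ** A ** S)) \<longleftrightarrow>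
        (\<forall>a b. (S ** G)$a$b + (transpose G ** S)$a$b = 2 * (S ** A ** S)$a$b)"
    unfolding mat_eq_iff by simp
  also have "\<dots> \<longleftrightarrow> (\<forall>a b. (S ** (G - A ** S))$a$b + (S ** (G - A ** S))$b$a = 0)"
    unfolding key by simp
  finally show ?thesis .
qed

lemma mv_axis: "((M::real^'n::finite^'n) *v axis k 1) $ i = M$i$k"
proof -
  have "((M::real^'n::finite^'n) *v axis k 1) $ i = (\<Sum>j\<in>UNIV. if j = k then M$i$j else 0)"
    unfolding mv_entry by (intro sum.cong) (auto simp: axis_def)
  then show ?thesis by simp
qed

lemma mv_hd: "((\<lambda>x. ((M::real^'n::finite^'n) *v x) $ i) has_derivative (\<lambda>h. (M *v h) $ i)) (at x)"
  by (rule bounded_linear_imp_has_derivative)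
     (rule bounded_linear_compose[OF bounded_linear_vec_nth matrix_vector_mul_bounded_linear])

lemma pd_mv[simp]: "pd k (\<lambda>x. ((M::real^'n::finite^'n) *v x) $ i) x = M$i$k"
  using pd_eq[OF mv_hd] by (simp add: mv_axis)

lemma sm_mv: "sm (\<lambda>x. ((M::real^'n::finite^'n) *v x) $ i)"
proof -
  have "(\<lambda>x. ((M::real^'n::finite^'n) *v x) $ i) = (\<lambda>x. \<Sum>j\<in>UNIV. M$i$j * x$j)"
    by (simp add: mv_entry)
  moreover have "sm (\<lambda>x::real^'n. \<Sum>j\<in>UNIV. M$i$j * x$j)"
    by (intro sm_sum' sm_mult sm_const sm_coord)
  ultimately show ?thesis by simp
qed

lemma sm_Q: "sm (\<lambda>x. (x::real^'n::finite) \<bullet> (S *v x))"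
proof -
  have "(\<lambda>x. (x::real^'n::finite) \<bullet> (S *v x)) = (\<lambda>x. \<Sum>i\<in>UNIV. x$i * (S *v x)$i)"
    by (simp add: inner_vec_def)
  moreover have "sm (\<lambda>x::real^'n. \<Sum>i\<in>UNIV. x$i * (S *v x)$i)"
    by (intro sm_sum' sm_mult sm_coord sm_mv)
  ultimately show ?thesis by simp
qed

definition rho :: "real^'n::finite^'n \<Rightarrow> real^'n \<Rightarrow> real" where
  "rho S x = exp (x \<bullet> (S *v x))"

lemma sm_rho: "sm (rho S)"
  unfolding rho_def[abs_def] by (rule sm_exp[OF sm_Q])

lemma rho_pos: "rho S x > 0" by (simp add: rho_def)

lemma pd_Q:
  fixes S :: "real^'n::finite^'n"
  assumes sS: "transpose S = S"
  shows "pd k (\<lambda>x. x \<bullet> (S *v x)) x = 2 * (S *v x)$k"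
proof -
  have "((\<lambda>x. x \<bullet> (S *v x)) has_derivative (\<lambda>h. x \<bullet> (S *v h) + h \<bullet> (S *v x))) (at x)"
    by (auto intro!: derivative_eq_intros bounded_linear.has_derivative[OF matrix_vector_mul_bounded_linear])
  from pd_eq[OF this, of k]
  have "pd k (\<lambda>x. x \<bullet> (S *v x)) x = x \<bullet> (S *v axis k 1) + axis k 1 \<bullet> (S *v x)" .
  also have "x \<bullet> (S *v axis k 1) = (S *v x)$k"
  proof -
    have "x \<bullet> (S *v axis k 1) = (\<Sum>i\<in>UNIV. (transpose S)$k$i * x$i)"
      by (simp add: inner_vec_def mv_axis tr_entry mult.commute)
    also have "\<dots> = (transpose S *v x)$k" by (simp only: mv_entry)
    finally show ?thesis using sS by simp
  qed
  also have "axis k 1 \<bullet> (S *v x) = (S *v x)$k"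
    by (simp add: inner_axis')
  finally show ?thesis by simp
qed

lemma pd_rho:
  fixes S :: "real^'n::finite^'n"
  assumes sS: "transpose S = S"
  shows "pd k (rho S) x = rho S x * (2 * (S *v x)$k)"
proof -
  have "pd k (\<lambda>x. exp (x \<bullet> (S *v x))) x = exp (x \<bullet> (S *v x)) * pd k (\<lambda>x. x \<bullet> (S *v x)) x"
    by (rule pd_chain[OF sm_diff[OF sm_Q] DERIV_exp])
  then show ?thesis by (simp add: rho_def[abs_def] pd_Q[OF sS])
qed

lemma pd_rho_fun:
  fixes S :: "real^'n::finite^'n"
  assumes sS: "transpose S = S"
  shows "pd j (rho S) = (\<lambda>x. rho S x * (2 * (S *v x)$j))"
  using pd_rho[OF sS] by blast

lemma sm_rho1: "sm (\<lambda>x. rho S x * (2 * (S *v x)$j))"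
  by (intro sm_mult sm_rho sm_const sm_mv)

lemma pd_rho2:
  fixes S :: "real^'n::finite^'n"
  assumes sS: "transpose S = S"
  shows "pd i (\<lambda>x. rho S x * (2 * (S *v x)$j)) x
     = rho S x * (2 * S$j$i) + rho S x * (2 * (S *v x)$i) * (2 * (S *v x)$j)"
proof -
  have d1: "(\<lambda>x::real^'n. 2::real) differentiable (at x)" by simp
  have d3: "(\<lambda>x. (S *v x)$j) differentiable (at x)" by (rule sm_diff[OF sm_mv])
  have d2: "(\<lambda>x. 2 * (S *v x)$j) differentiable (at x)"
    by (intro sm_diff sm_mult sm_const sm_mv)
  have p2: "pd i (\<lambda>x. 2 * (S *v x)$j) x = 2 * S$j$i"
    using pd_mult[OF d1 d3, of i] by simp
  have "pd i (\<lambda>x. rho S x * (2 * (S *v x)$j)) x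
     = rho S x * pd i (\<lambda>x. 2 * (S *v x)$j) x + pd i (rho S) x * (2 * (S *v x)$j)"
    by (rule pd_mult[OF sm_diff[OF sm_rho] d2])
  then show ?thesis by (simp only: p2 pd_rho[OF sS])
qed

lemma sm_Mrho: "sm (\<lambda>x. ((M::real^'n::finite^'n) *v x)$i * rho S x)"
  by (intro sm_mult sm_rho sm_mv)

lemma pd_Mrho:
  fixes S M :: "real^'n::finite^'n"
  assumes sS: "transpose S = S"
  shows "pd i (\<lambda>x. (M *v x)$i * rho S x) x = (M *v x)$i * (rho S x * (2 * (S *v x)$i)) + M$i$i * rho S x"
proof -
  have "pd i (\<lambda>x. (M *v x)$i * rho S x) x = (M *v x)$i * pd i (rho S) x + pd i (\<lambda>x. (M *v x)$i) x * rho S x"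
    by (rule pd_mult[OF sm_diff[OF sm_mv] sm_diff[OF sm_rho]])
  then show ?thesis by (simp only: pd_rho[OF sS] pd_mv)
qed

lemma adj1:
  fixes f v :: "real^'n::finite \<Rightarrow> real"
  assumes tf: "test_fun f" and v: "C1 v"
  shows "integrable lborel (\<lambda>x. pd i f x * v x)"
    and "integrable lborel (\<lambda>x. - (f x * pd i v x))"
    and "integral\<^sup>L lborel (\<lambda>x. pd i f x * v x) = integral\<^sup>L lborel (\<lambda>x. - (f x * pd i v x))"
proof -
  obtain R where R: "\<forall>x. R < norm x \<longrightarrow> f x = 0" using test_supp[OF tf] by blast
  note I = ibp[OF test_C1(1)[OF tf] v R, of i]
  show "integrable lborel (\<lambda>x. pd i f x * v x)" using I(1) .
  show "integrable lborel (\<lambda>x. - (f x * pd i v x))" using I(2) by simp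
  show "integral\<^sup>L lborel (\<lambda>x. pd i f x * v x) = integral\<^sup>L lborel (\<lambda>x. - (f x * pd i v x))"
    using I(3) by simp
qed

lemma adj2:
  fixes f v :: "real^'n::finite \<Rightarrow> real"
  assumes tf: "test_fun f" and v: "C1 v" and v': "C1 (pd j v)"
  shows "integrable lborel (\<lambda>x. pd j (pd i f) x * v x)"
    and "integrable lborel (\<lambda>x. f x * pd i (pd j v) x)"
    and "integral\<^sup>L lborel (\<lambda>x. pd j (pd i f) x * v x) = integral\<^sup>L lborel (\<lambda>x. f x * pd i (pd j v) x)"
proof -
  obtain R where R: "\<forall>x. R < norm x \<longrightarrow> f x = 0" using test_supp[OF tf] by blast
  have R': "\<forall>x. R < norm x \<longrightarrow> pd i f x = 0" using pd_supp[OF R] by blast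
  note I1 = ibp[OF test_C1(2)[OF tf] v R', of j]
  note I2 = ibp[OF test_C1(1)[OF tf] v' R, of i]
  show "integrable lborel (\<lambda>x. pd j (pd i f) x * v x)" using I1(1) .
  show "integrable lborel (\<lambda>x. f x * pd i (pd j v) x)" using I2(2) .
  show "integral\<^sup>L lborel (\<lambda>x. pd j (pd i f) x * v x) = integral\<^sup>L lborel (\<lambda>x. f x * pd i (pd j v) x)"
    using I1(3) I2(3) by simp
qed

lemma int_fc:
  fixes f w :: "real^'n::finite \<Rightarrow> real"
  assumes tf: "test_fun f" and w: "continuous_on UNIV w"
  shows "integrable lborel (\<lambda>x. f x * w x)"
proof -
  obtain R where R: "\<forall>x. R < norm x \<longrightarrow> f x = 0" using test_supp[OF tf] by blast
  show ?thesis
    by (rule cont_supp_integrable[where R=R]) (use R C1_cont[OF test_C1(1)[OF tf]] w in \<open>auto intro!: continuous_intros\<close>)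
qed

lemma int_sum_eq:
  fixes F F' :: "'i \<Rightarrow> 'a \<Rightarrow> real"
  assumes "\<And>i. i \<in> I \<Longrightarrow> integrable M (F i)" "\<And>i. i \<in> I \<Longrightarrow> integrable M (F' i)"
    "\<And>i. i \<in> I \<Longrightarrow> integral\<^sup>L M (F i) = integral\<^sup>L M (F' i)"
  shows "integrable M (\<lambda>x. \<Sum>i\<in>I. F i x)" "integrable M (\<lambda>x. \<Sum>i\<in>I. F' i x)"
    "integral\<^sup>L M (\<lambda>x. \<Sum>i\<in>I. F i x) = integral\<^sup>L M (\<lambda>x. \<Sum>i\<in>I. F' i x)"
proof -
  show "integrable M (\<lambda>x. \<Sum>i\<in>I. F i x)" by (rule Bochner_Integration.integrable_sum, rule assms(1))
  show "integrable M (\<lambda>x. \<Sum>i\<in>I. F' i x)" by (rule Bochner_Integration.integrable_sum, rule assms(2))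
  have "integral\<^sup>L M (\<lambda>x. \<Sum>i\<in>I. F i x) = (\<Sum>i\<in>I. integral\<^sup>L M (F i))"
    by (rule Bochner_Integration.integral_sum, rule assms(1))
  also have "\<dots> = (\<Sum>i\<in>I. integral\<^sup>L M (F' i))" using assms(3) by simp
  also have "\<dots> = integral\<^sup>L M (\<lambda>x. \<Sum>i\<in>I. F' i x)"
    by (rule Bochner_Integration.integral_sum[symmetric], rule assms(2))
  finally show "integral\<^sup>L M (\<lambda>x. \<Sum>i\<in>I. F i x) = integral\<^sup>L M (\<lambda>x. \<Sum>i\<in>I. F' i x)" .
qed

lemma int_cmult_eq:
  fixes F F' :: "'a \<Rightarrow> real"
  assumes "integrable M F" "integrable M F'" "integral\<^sup>L M F = integral\<^sup>L M F'"
  shows "integrable M (\<lambda>x. c * F x)" "integrable M (\<lambda>x. c * F' x)"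
    "integral\<^sup>L M (\<lambda>x. c * F x) = integral\<^sup>L M (\<lambda>x. c * F' x)"
  using assms by auto

lemma int_add_eq:
  fixes F F' K K' :: "'a \<Rightarrow> real"
  assumes "integrable M F" "integrable M F'" "integral\<^sup>L M F = integral\<^sup>L M F'"
    "integrable M K" "integrable M K'" "integral\<^sup>L M K = integral\<^sup>L M K'"
  shows "integral\<^sup>L M (\<lambda>x. F x + K x) = integral\<^sup>L M (\<lambda>x. F' x + K' x)"
  using assms by (simp add: integral_add)

lemma h1: "(\<Sum>i\<in>UNIV. \<Sum>j\<in>UNIV. (A::real^'n::finite^'n)$i$j * (a$i * a$j)) = a \<bullet> (A *v a)"
  by (simp add: inner_vec_def mv_entry sum_distrib_left mult.assoc mult.left_commute)

lemma h2: "(\<Sum>i\<in>UNIV. ((M::real^'n::finite^'n) *v x)$i * a$i) = a \<bullet> (M *v x)"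
  by (simp add: inner_vec_def mult.commute)

lemma h3: "(\<Sum>i\<in>UNIV. \<Sum>j\<in>UNIV. (A::real^'n::finite^'n)$i$j * S$j$i) = trace (A ** S)"
  by (simp add: trace_def mm_entry)

lemma Z_iff:
  fixes H K :: "real^'n::finite^'n"
  shows "(\<forall>x. c + 2 * (x \<bullet> (K *v x)) = 0) \<longleftrightarrow> c = 0 \<and> (\<forall>a b. K$a$b + K$b$a = 0)"
proof -
  have e: "2 * (x \<bullet> (K *v x)) = (\<Sum>a\<in>UNIV. \<Sum>b\<in>UNIV. x$a * x$b * (2 * K$a$b))" for x :: "real^'n"
    by (simp add: qf sum_distrib_left mult.left_commute)
  have "(\<forall>x. c + 2 * (x \<bullet> (K *v x)) = 0) \<longleftrightarrow> c = 0 \<and> (\<forall>a b. 2 * K$a$b + 2 * K$b$a = 0)"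
    unfolding e by (rule QL)
  moreover have "(2 * K$a$b + 2 * K$b$a = 0) \<longleftrightarrow> (K$a$b + K$b$a = 0)" for a b by linarith
  ultimately show ?thesis by simp
qed

lemma LAG_sum:
  fixes A G :: "real^'n::finite^'n"
  shows "LAG A G f x = 1/2 * (\<Sum>i\<in>UNIV. \<Sum>j\<in>UNIV. A$i$j * pd j (pd i f) x)
     + (\<Sum>i\<in>UNIV. (G *v x)$i * pd i f x)"
  by (simp add: LAG_def trace_def mm_entry hess_def inner_vec_def grad_def)

definition Zf :: "real^'n::finite^'n \<Rightarrow> real^'n^'n \<Rightarrow> real^'n^'n \<Rightarrow> real^'n \<Rightarrow> real" where
  "Zf A G S x = trace (G - A ** S) + 2 * (x \<bullet> ((S ** (G - A ** S)) *v x))"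

definition Wf :: "real^'n::finite^'n \<Rightarrow> real^'n^'n \<Rightarrow> real^'n^'n \<Rightarrow> real^'n \<Rightarrow> real" where
  "Wf A G S x = (\<Sum>i\<in>UNIV. \<Sum>j\<in>UNIV. (1/2 * A$i$j) * pd i (pd j (rho S)) x)
     + (\<Sum>i\<in>UNIV. (-1) * pd i (\<lambda>x. (G *v x)$i * rho S x) x)"

lemma sm_Wf: "sm (Wf A G S)"
  unfolding Wf_def[abs_def]
  by (intro sm_add sm_sum' sm_mult sm_const sm_pd sm_rho sm_Mrho)

lemma xSx_expand:
  fixes A G S :: "real^'n::finite^'n"
  assumes sS: "transpose S = S"
  shows "x \<bullet> ((S ** (G - A ** S)) *v x) = (S *v x) \<bullet> (G *v x) - (S *v x) \<bullet> (A *v (S *v x))"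
proof -
  have "(S ** (G - A ** S)) *v x = (S ** G) *v x - (S ** (A ** S)) *v x"
    by (simp add: mat_sub_ldistrib matrix_vector_mult_diff_rdistrib)
  then have "x \<bullet> ((S ** (G - A ** S)) *v x) = x \<bullet> ((S ** G) *v x) - x \<bullet> ((S ** (A ** S)) *v x)"
    by (simp add: inner_diff_right)
  also have "x \<bullet> ((S ** G) *v x) = (S *v x) \<bullet> (G *v x)"
    by (simp add: dot_sym_mat[OF sS])
  also have "x \<bullet> ((S ** (A ** S)) *v x) = (S *v x) \<bullet> (A *v (S *v x))"
    by (simp add: dot_sym_mat[OF sS] matrix_vector_mul_assoc)
  finally show ?thesis .
qed

lemma Wf_eq:
  fixes A G S :: "real^'n::finite^'n"
  assumes sS: "transpose S = S"
  shows "Wf A G S x = - (rho S x * Zf A G S x)"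
proof -
  let ?r = "rho S x" and ?a = "S *v x"
  have p2: "pd i (pd j (rho S)) x = ?r * (2 * S$j$i) + ?r * (2 * ?a$i) * (2 * ?a$j)" for i j
    unfolding pd_rho_fun[OF sS] by (rule pd_rho2[OF sS])
  have p1: "pd i (\<lambda>x. (G *v x)$i * rho S x) x = (G *v x)$i * (?r * (2 * ?a$i)) + G$i$i * ?r" for i
    by (rule pd_Mrho[OF sS])
  have "Wf A G S x = (\<Sum>i\<in>UNIV. \<Sum>j\<in>UNIV. (1/2 * A$i$j) * (?r * (2 * S$j$i) + ?r * (2 * ?a$i) * (2 * ?a$j)))
     + (\<Sum>i\<in>UNIV. (-1) * ((G *v x)$i * (?r * (2 * ?a$i)) + G$i$i * ?r))"
    unfolding Wf_def p2 p1 ..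
  also have "\<dots> = ?r * (\<Sum>i\<in>UNIV. \<Sum>j\<in>UNIV. A$i$j * S$j$i)
      + 2 * ?r * (\<Sum>i\<in>UNIV. \<Sum>j\<in>UNIV. A$i$j * (?a$i * ?a$j))
      - 2 * ?r * (\<Sum>i\<in>UNIV. (G *v x)$i * ?a$i) - ?r * (\<Sum>i\<in>UNIV. G$i$i)"
    by (simp add: sum_distrib_left sum.distrib sum_negf sum_subtractf algebra_simps)
  also have "\<dots> = ?r * trace (A ** S) + 2 * ?r * (?a \<bullet> (A *v ?a)) - 2 * ?r * (?a \<bullet> (G *v x)) - ?r * trace G"
    by (simp only: h1 h2 h3 trace_def)
  also have "\<dots> = - (?r * Zf A G S x)"
    by (simp add: Zf_def xSx_expand[OF sS] trace_sub algebra_simps)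
  finally show ?thesis .
qed

lemma int_LAG:
  fixes A G S :: "real^'n::finite^'n"
  assumes sS: "transpose S = S" and tf: "test_fun f"
  shows "integrable lborel (\<lambda>x. rho S x * LAG A G f x)"
    and "integral\<^sup>L lborel (\<lambda>x. rho S x * LAG A G f x) = integral\<^sup>L lborel (\<lambda>x. f x * Wf A G S x)"
proof -
  define g where "g i x = (G *v x)$i * rho S x" for i x
  have pt: "rho S x * LAG A G f x = (\<Sum>i\<in>UNIV. \<Sum>j\<in>UNIV. (1/2*A$i$j) * (pd j (pd i f) x * rho S x))
      + (\<Sum>i\<in>UNIV. pd i f x * g i x)" for x
    by (simp add: LAG_sum g_def sum_distrib_left algebra_simps)
  have pt2: "f x * Wf A G S x = (\<Sum>i\<in>UNIV. \<Sum>j\<in>UNIV. (1/2*A$i$j) * (f x * pd i (pd j (rho S)) x))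
      + (\<Sum>i\<in>UNIV. - (f x * pd i (g i) x))" for x
    by (simp add: Wf_def g_def[abs_def] sum_distrib_left algebra_simps)
  have c0: "C1 (rho S)" by (rule sm_C1[OF sm_rho])
  have c1: "C1 (pd j (rho S))" for j by (rule sm_C1[OF sm_pd[OF sm_rho]])
  have cg: "C1 (g i)" for i unfolding g_def[abs_def] by (rule sm_C1[OF sm_Mrho])
  have inner: "integrable lborel (\<lambda>x. \<Sum>j\<in>UNIV. (1/2*A$i$j) * (pd j (pd i f) x * rho S x))"
      "integrable lborel (\<lambda>x. \<Sum>j\<in>UNIV. (1/2*A$i$j) * (f x * pd i (pd j (rho S)) x))"
      "integral\<^sup>L lborel (\<lambda>x. \<Sum>j\<in>UNIV. (1/2*A$i$j) * (pd j (pd i f) x * rho S x))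
       = integral\<^sup>L lborel (\<lambda>x. \<Sum>j\<in>UNIV. (1/2*A$i$j) * (f x * pd i (pd j (rho S)) x))" for i
    by (rule int_sum_eq, rule int_cmult_eq[OF adj2[OF tf c0 c1]],
        rule int_cmult_eq[OF adj2[OF tf c0 c1]], rule int_cmult_eq[OF adj2[OF tf c0 c1]])+
  have outer: "integrable lborel (\<lambda>x. \<Sum>i\<in>UNIV. \<Sum>j\<in>UNIV. (1/2*A$i$j) * (pd j (pd i f) x * rho S x))"
      "integrable lborel (\<lambda>x. \<Sum>i\<in>UNIV. \<Sum>j\<in>UNIV. (1/2*A$i$j) * (f x * pd i (pd j (rho S)) x))"
      "integral\<^sup>L lborel (\<lambda>x. \<Sum>i\<in>UNIV. \<Sum>j\<in>UNIV. (1/2*A$i$j) * (pd j (pd i f) x * rho S x))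
       = integral\<^sup>L lborel (\<lambda>x. \<Sum>i\<in>UNIV. \<Sum>j\<in>UNIV. (1/2*A$i$j) * (f x * pd i (pd j (rho S)) x))"
    by (rule int_sum_eq, rule inner(1), rule inner(2), rule inner(3))+
  have drift: "integrable lborel (\<lambda>x. \<Sum>i\<in>UNIV. pd i f x * g i x)"
      "integrable lborel (\<lambda>x. \<Sum>i\<in>UNIV. - (f x * pd i (g i) x))"
      "integral\<^sup>L lborel (\<lambda>x. \<Sum>i\<in>UNIV. pd i f x * g i x)
       = integral\<^sup>L lborel (\<lambda>x. \<Sum>i\<in>UNIV. - (f x * pd i (g i) x))"
    by (rule int_sum_eq, rule adj1[OF tf cg], rule adj1[OF tf cg], rule adj1[OF tf cg])+
  show "integrable lborel (\<lambda>x. rho S x * LAG A G f x)"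
    unfolding pt using outer(1) drift(1) by (rule Bochner_Integration.integrable_add)
  show "integral\<^sup>L lborel (\<lambda>x. rho S x * LAG A G f x) = integral\<^sup>L lborel (\<lambda>x. f x * Wf A G S x)"
    unfolding pt pt2 by (rule int_add_eq[OF outer drift])
qed

lemma LAG_meas:
  fixes A G :: "real^'n::finite^'n"
  assumes tf: "test_fun f"
  shows "LAG A G f \<in> borel_measurable lborel"
proof -
  have c2: "continuous_on UNIV (pd j (pd i f))" for i j using test_C1(2)[OF tf, of i] by (simp add: C1_def)
  have c1: "continuous_on UNIV (pd i f)" for i using test_C1(1)[OF tf] by (simp add: C1_def)
  have cm: "continuous_on UNIV (\<lambda>x. (G *v x)$i)" for i by (rule sm_cont[OF sm_mv])
  have "continuous_on UNIV (LAG A G f)"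
    unfolding LAG_sum[abs_def]
    by (intro continuous_intros c1 c2 cm)
  then show ?thesis by (rule cont_meas)
qed

lemma INV:
  fixes A G S :: "real^'n::finite^'n"
  assumes sS: "transpose S = S"
  shows "inf_invariant (density lborel (\<lambda>x. ennreal (exp (x \<bullet> (S *v x))))) (LAG A G)
     \<longleftrightarrow> (\<forall>x. Zf A G S x = 0)"
proof -
  have dens: "density lborel (\<lambda>x. ennreal (exp (x \<bullet> (S *v x)))) = density lborel (\<lambda>x. ennreal (rho S x))"
    by (simp add: rho_def)
  have rm: "rho S \<in> borel_measurable lborel" by (rule cont_meas[OF sm_cont[OF sm_rho]])
  have rnn: "AE x in lborel. 0 \<le> rho S x" by (simp add: less_imp_le[OF rho_pos])
  have key: "integrable (density lborel (\<lambda>x. ennreal (rho S x))) (LAG A G f)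
       \<and> integral\<^sup>L (density lborel (\<lambda>x. ennreal (rho S x))) (LAG A G f) = integral\<^sup>L lborel (\<lambda>x. f x * Wf A G S x)"
    if tf: "test_fun f" for f
  proof
    show "integrable (density lborel (\<lambda>x. ennreal (rho S x))) (LAG A G f)"
      using integrable_density[OF LAG_meas[OF tf] rm rnn] int_LAG(1)[OF sS tf] by simp
    have "integral\<^sup>L (density lborel (\<lambda>x. ennreal (rho S x))) (LAG A G f) = integral\<^sup>L lborel (\<lambda>x. rho S x * LAG A G f x)"
      using integral_density[OF LAG_meas[OF tf] rm rnn] by simp
    then show "integral\<^sup>L (density lborel (\<lambda>x. ennreal (rho S x))) (LAG A G f) = integral\<^sup>L lborel (\<lambda>x. f x * Wf A G S x)"
      using int_LAG(2)[OF sS tf] by simp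
  qed
  have "inf_invariant (density lborel (\<lambda>x. ennreal (exp (x \<bullet> (S *v x))))) (LAG A G)
      \<longleftrightarrow> (\<forall>f. test_fun f \<longrightarrow> integral\<^sup>L lborel (\<lambda>x. f x * Wf A G S x) = 0)"
    unfolding inf_invariant_def dens using key by auto
  also have "\<dots> \<longleftrightarrow> (\<forall>x. Wf A G S x = 0)"
  proof
    assume "\<forall>f. test_fun f \<longrightarrow> integral\<^sup>L lborel (\<lambda>x. f x * Wf A G S x) = 0"
    then show "\<forall>x. Wf A G S x = 0" using fund[OF sm_cont[OF sm_Wf]] by blast
  qed simp
  also have "\<dots> \<longleftrightarrow> (\<forall>x. Zf A G S x = 0)"
  proof -
    have rn: "rho S x \<noteq> 0" for x by (simp add: rho_def)
    show ?thesis by (simp add: Wf_eq[OF sS] rn)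
  qed
  finally show ?thesis .
qed

lemma sm_Phi: "sm (\<lambda>x::real^'n::finite. 1/2 * (x \<bullet> (S *v x)))"
  by (intro sm_mult sm_const sm_Q)

lemma grad_Phi:
  fixes S :: "real^'n::finite^'n"
  assumes sS: "transpose S = S"
  shows "grad (\<lambda>x. 1/2 * (x \<bullet> (S *v x))) x = S *v x"
proof -
  have "pd k (\<lambda>x. 1/2 * (x \<bullet> (S *v x))) x = 1/2 * pd k (\<lambda>x. x \<bullet> (S *v x)) x + 0 * (x \<bullet> (S *v x))" for k
    using pd_mult[OF _ sm_diff[OF sm_Q], of "\<lambda>x. 1/2" x k] by simp
  then show ?thesis by (simp add: grad_def vec_eq_iff pd_Q[OF sS])
qed

definition W2 :: "real^'n::finite^'n \<Rightarrow> real^'n^'n \<Rightarrow> real^'n \<Rightarrow> real" where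
  "W2 H S x = (\<Sum>i\<in>UNIV. (-1) * pd i (\<lambda>x. (H *v x)$i * rho S x) x)"

lemma sm_W2: "sm (W2 H S)"
  unfolding W2_def[abs_def] by (intro sm_sum' sm_mult sm_const sm_pd sm_Mrho)

lemma W2_eq_gen:
  fixes H S :: "real^'n::finite^'n"
  assumes sS: "transpose S = S"
  shows "W2 H S x = - (rho S x * (trace H + 2 * (x \<bullet> ((S ** H) *v x))))"
proof -
  let ?r = "rho S x" and ?a = "S *v x"
  have "W2 H S x = (\<Sum>i\<in>UNIV. (-1) * ((H *v x)$i * (?r * (2 * ?a$i)) + H$i$i * ?r))"
    unfolding W2_def pd_Mrho[OF sS] ..
  also have "\<dots> = - ((\<Sum>i\<in>UNIV. (H *v x)$i * (?r * (2 * ?a$i))) + (\<Sum>i\<in>UNIV. H$i$i * ?r))"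
    by (simp add: sum.distrib sum_negf sum_subtractf)
  also have "(\<Sum>i\<in>UNIV. (H *v x)$i * (?r * (2 * ?a$i))) = ?r * (2 * (\<Sum>i\<in>UNIV. (H *v x)$i * ?a$i))"
    by (simp add: sum_distrib_left algebra_simps)
  also have "(\<Sum>i\<in>UNIV. H$i$i * ?r) = ?r * trace H"
    by (simp add: trace_def sum_distrib_left mult.commute)
  also have "(\<Sum>i\<in>UNIV. (H *v x)$i * ?a$i) = x \<bullet> ((S ** H) *v x)"
    by (simp only: h2 dot_sym_mat[OF sS])
  finally show ?thesis by (simp add: algebra_simps)
qed

lemma W2_eq:
  fixes A G S :: "real^'n::finite^'n"
  assumes sS: "transpose S = S"
  shows "W2 (G - A ** S) S x = - (rho S x * Zf A G S x)"
  unfolding W2_eq_gen[OF sS] Zf_def ..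

lemma pt_gen:
  fixes H S :: "real^'n::finite^'n"
  shows "((H *v x) \<bullet> grad f x) * exp (2 * (1/2 * (x \<bullet> (S *v x))))
     = (\<Sum>i\<in>UNIV. pd i f x * ((H *v x)$i * rho S x))"
proof -
  have e: "exp (2 * (1/2 * (x \<bullet> (S *v x)))) = rho S x" by (simp add: rho_def)
  have "((H *v x) \<bullet> grad f x) = (\<Sum>i\<in>UNIV. (H *v x)$i * pd i f x)"
    by (simp add: inner_vec_def grad_def)
  then have "((H *v x) \<bullet> grad f x) * rho S x = (\<Sum>i\<in>UNIV. (H *v x)$i * pd i f x * rho S x)"
    by (simp add: sum_distrib_right)
  also have "\<dots> = (\<Sum>i\<in>UNIV. pd i f x * ((H *v x)$i * rho S x))"
    by (intro sum.cong refl) (simp add: mult_ac)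
  finally show ?thesis unfolding e .
qed

lemma WHHD_iff:
  fixes A G S :: "real^'n::finite^'n"
  assumes sS: "transpose S = S"
  shows "WHHD (\<lambda>x. S *v x + (G - A ** S) *v x) (\<lambda>x. 1/2 * (x \<bullet> (S *v x))) (\<lambda>x. (G - A ** S) *v x)
     \<longleftrightarrow> (\<forall>x. Zf A G S x = 0)"
proof -
  let ?H = "G - A ** S"
  define h where "h i x = (?H *v x)$i * rho S x" for i x
  have ch: "C1 (h i)" for i unfolding h_def[abs_def] by (rule sm_C1[OF sm_Mrho])
  have pt: "((?H *v x) \<bullet> grad f x) * exp (2 * (1/2 * (x \<bullet> (S *v x)))) = (\<Sum>i\<in>UNIV. pd i f x * h i x)"
    for f x unfolding h_def by (rule pt_gen)
  have pt2: "f x * W2 ?H S x = (\<Sum>i\<in>UNIV. - (f x * pd i (h i) x))" for f x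
    by (simp add: W2_def h_def[abs_def] sum_distrib_left)
  have key: "integral\<^sup>L lborel (\<lambda>x. ((?H *v x) \<bullet> grad f x) * exp (2 * (1/2 * (x \<bullet> (S *v x)))))
      = integral\<^sup>L lborel (\<lambda>x. f x * W2 ?H S x)" if tf: "test_fun f" for f
    unfolding pt pt2
    by (rule int_sum_eq(3), rule adj1[OF tf ch], rule adj1[OF tf ch], rule adj1[OF tf ch])
  have "WHHD (\<lambda>x. S *v x + ?H *v x) (\<lambda>x. 1/2 * (x \<bullet> (S *v x))) (\<lambda>x. ?H *v x)
     \<longleftrightarrow> (\<forall>f. test_fun f \<longrightarrow> integral\<^sup>L lborel (\<lambda>x. f x * W2 ?H S x) = 0)"
    unfolding WHHD_def using key sm_diff[OF sm_Phi] grad_Phi[OF sS] by auto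
  also have "\<dots> \<longleftrightarrow> (\<forall>x. W2 ?H S x = 0)"
  proof
    assume "\<forall>f. test_fun f \<longrightarrow> integral\<^sup>L lborel (\<lambda>x. f x * W2 ?H S x) = 0"
    then show "\<forall>x. W2 ?H S x = 0" using fund[OF sm_cont[OF sm_W2]] by blast
  qed simp
  also have "\<dots> \<longleftrightarrow> (\<forall>x. Zf A G S x = 0)"
  proof -
    have rn: "rho S x \<noteq> 0" for x by (simp add: rho_def)
    show ?thesis by (simp add: W2_eq[OF sS] rn)
  qed
  finally show ?thesis .
qed

lemma sm_q: "sm (\<lambda>x. ((S::real^'n::finite^'n) *v x) \<bullet> (H *v x))"
proof -
  have "(\<lambda>x. ((S::real^'n::finite^'n) *v x) \<bullet> (H *v x)) = (\<lambda>x. \<Sum>i\<in>UNIV. (S *v x)$i * (H *v x)$i)"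
    by (simp add: inner_vec_def)
  moreover have "sm (\<lambda>x::real^'n. \<Sum>i\<in>UNIV. (S *v x)$i * (H *v x)$i)"
    by (intro sm_sum' sm_mult sm_mv)
  ultimately show ?thesis by simp
qed

lemma AE_zero_iff:
  fixes q :: "real^'n::finite \<Rightarrow> real"
  assumes cq: "continuous_on UNIV q"
  shows "(AE x in lborel. q x = 0) \<longleftrightarrow> (\<forall>x. q x = 0)"
proof
  assume ae: "AE x in lborel. q x = 0"
  have "integral\<^sup>L lborel (\<lambda>x. f x * q x) = 0" if tf: "test_fun f" for f :: "real^'n \<Rightarrow> real"
  proof -
    have cf: "continuous_on UNIV f" by (rule C1_cont[OF test_C1(1)[OF tf]])
    have "AE x in lborel. f x * q x = 0" using ae by auto
    then show ?thesis by (rule integral_eq_zero_AE)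
  qed
  then show "\<forall>x. q x = 0" using fund[OF cq] by blast
qed simp

lemma SOHHD_gen:
  fixes H S :: "real^'n::finite^'n"
  assumes sS: "transpose S = S"
  shows "SOHHD (\<lambda>x. S *v x + H *v x) (\<lambda>x. 1/2 * (x \<bullet> (S *v x))) (\<lambda>x. H *v x)
     \<longleftrightarrow> trace H = 0 \<and> (\<forall>x. (S *v x) \<bullet> (H *v x) = 0)"
proof -
  have cont: "continuous_on UNIV (\<lambda>x. S *v x + H *v x)"
    by (intro continuous_on_add linear_continuous_on matrix_vector_mul_bounded_linear)
  have c1p: "C1 (\<lambda>x::real^'n. 1/2 * (x \<bullet> (S *v x)))" by (rule sm_C1[OF sm_Phi])
  have c1b: "C1_field (\<lambda>x. H *v x)" unfolding C1_field_def by (intro allI sm_C1[OF sm_mv])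
  have pt: "(H *v x) \<bullet> grad f x = (\<Sum>i\<in>UNIV. pd i f x * (H *v x)$i)" for f x
    by (simp add: inner_vec_def grad_def mult.commute)
  have pt2: "f x * (- trace H) = (\<Sum>i\<in>UNIV. - (f x * pd i (\<lambda>x. (H *v x)$i) x))" for f x
    by (simp add: trace_def sum_distrib_left sum_negf)
  have cv: "C1 (\<lambda>x. (H *v x)$i)" for i by (rule sm_C1[OF sm_mv])
  have key: "integral\<^sup>L lborel (\<lambda>x. (H *v x) \<bullet> grad f x) = integral\<^sup>L lborel (\<lambda>x. f x * (- trace H))"
    if tf: "test_fun f" for f
    unfolding pt pt2
    by (rule int_sum_eq(3), rule adj1[OF tf cv], rule adj1[OF tf cv], rule adj1[OF tf cv])
  have tr: "(\<forall>f. test_fun f \<longrightarrow> integral\<^sup>L lborel (\<lambda>x. (H *v x) \<bullet> grad f x) = 0) \<longleftrightarrow> trace H = 0"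
  proof
    assume a: "\<forall>f. test_fun f \<longrightarrow> integral\<^sup>L lborel (\<lambda>x. (H *v x) \<bullet> grad f x) = 0"
    have "integral\<^sup>L lborel (\<lambda>x. f x * (- trace H)) = 0" if tf: "test_fun f" for f :: "real^'n \<Rightarrow> real"
      using a[rule_format, OF tf] key[OF tf] by linarith
    then have "\<forall>f::real^'n \<Rightarrow> real. test_fun f \<longrightarrow> integral\<^sup>L lborel (\<lambda>x. f x * (- trace H)) = 0" by blast
    from fund[OF continuous_on_const this] show "trace H = 0" by simp
  qed (simp add: key)
  have gb: "grad (\<lambda>x. 1/2 * (x \<bullet> (S *v x))) x \<bullet> (H *v x) = (S *v x) \<bullet> (H *v x)" for x
    unfolding grad_Phi[OF sS] ..
  have ae: "(AE x in lborel. grad (\<lambda>x. 1/2 * (x \<bullet> (S *v x))) x \<bullet> (H *v x) = 0)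
      \<longleftrightarrow> (\<forall>x. (S *v x) \<bullet> (H *v x) = 0)"
    unfolding gb by (rule AE_zero_iff[OF sm_cont[OF sm_q]])
  show ?thesis
    unfolding SOHHD_def OHHD_def tr ae using cont c1p c1b sm_diff[OF sm_Phi] grad_Phi[OF sS]
    by auto
qed

lemma SOHHD_iff:
  fixes A G S :: "real^'n::finite^'n"
  assumes sS: "transpose S = S"
  shows "SOHHD (\<lambda>x. S *v x + (G - A ** S) *v x) (\<lambda>x. 1/2 * (x \<bullet> (S *v x))) (\<lambda>x. (G - A ** S) *v x)
     \<longleftrightarrow> (\<forall>x. Zf A G S x = 0)"
proof -
  let ?H = "G - A ** S"
  have e: "(S *v x) \<bullet> (?H *v x) = x \<bullet> ((S ** ?H) *v x)" for x by (rule dot_sym_mat[OF sS])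
  have z0: "(\<forall>x. 0 + 2 * (x \<bullet> ((S ** ?H) *v x)) = 0) \<longleftrightarrow> 0 = (0::real) \<and> (\<forall>a b. (S ** ?H)$a$b + (S ** ?H)$b$a = 0)"
    by (rule Z_iff)
  have z1: "(\<forall>x. trace ?H + 2 * (x \<bullet> ((S ** ?H) *v x)) = 0) \<longleftrightarrow> trace ?H = 0 \<and> (\<forall>a b. (S ** ?H)$a$b + (S ** ?H)$b$a = 0)"
    by (rule Z_iff)
  show ?thesis
    unfolding SOHHD_gen[OF sS] Zf_def e z1 using z0 by simp
qed

theorem lemma2p11:
  fixes A G S :: "real^('n::finite)^('n::finite)"
  assumes "CARD('n) \<ge> 2"
    and "transpose A = A"
    and "\<forall>x::real^'n. x \<noteq> 0 \<longrightarrow> x \<bullet> (A *v x) > 0"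
    and "transpose S = S"
  defines "Phi \<equiv> (\<lambda>x::real^'n. 1/2 * (x \<bullet> (S *v x)))"
    and "\<mu> \<equiv> density lborel (\<lambda>x::real^'n. ennreal (exp (x \<bullet> (S *v x))))"
    and "H \<equiv> G - A ** S"
    and "Gt \<equiv> (\<lambda>x::real^'n. S *v x + (G - A ** S) *v x)"
    and "B \<equiv> (\<lambda>x::real^'n. (G - A ** S) *v x)"
  shows "(inf_invariant \<mu> (LAG A G) \<longleftrightarrow>
            (S ** G + transpose G ** S = 2 *\<^sub>R (S ** A ** S) \<and> trace (G - A ** S) = 0))
       \<and> ((S ** G + transpose G ** S = 2 *\<^sub>R (S ** A ** S) \<and> trace (G - A ** S) = 0) \<longleftrightarrow>
            ((\<forall>j. (\<Sum>i\<in>UNIV. S$i$j * H$i$j) = 0)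
             \<and> (\<forall>j k. j \<noteq> k \<longrightarrow> (\<Sum>i\<in>UNIV. S$i$j * H$i$k + S$i$k * H$i$j) = 0)
             \<and> (\<Sum>i\<in>UNIV. H$i$i) = 0))
       \<and> (WHHD Gt Phi B \<longleftrightarrow> SOHHD Gt Phi B)
       \<and> (SOHHD Gt Phi B \<longleftrightarrow> inf_invariant \<mu> (LAG A G))"
proof -
  have sA: "transpose A = A" and sS: "transpose S = S" using assms(2,4) by auto
  let ?C = "S ** G + transpose G ** S = 2 *\<^sub>R (S ** A ** S) \<and> trace (G - A ** S) = 0"
  let ?K = "S ** (G - A ** S)"
  have zc: "(\<forall>x. Zf A G S x = 0) \<longleftrightarrow> ?C"
  proof -
    have "(\<forall>x. Zf A G S x = 0) \<longleftrightarrow> trace (G - A ** S) = 0 \<and> (\<forall>a b. ?K$a$b + ?K$b$a = 0)"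
      unfolding Zf_def by (rule Z_iff)
    then show ?thesis using cond_H[OF sA sS] by blast
  qed
  have p1: "inf_invariant \<mu> (LAG A G) \<longleftrightarrow> ?C"
    unfolding \<mu>_def INV[OF sS] zc ..
  have p2: "?C \<longleftrightarrow> ((\<forall>j. (\<Sum>i\<in>UNIV. S$i$j * H$i$j) = 0)
             \<and> (\<forall>j k. j \<noteq> k \<longrightarrow> (\<Sum>i\<in>UNIV. S$i$j * H$i$k + S$i$k * H$i$j) = 0)
             \<and> (\<Sum>i\<in>UNIV. H$i$i) = 0)"
  proof -
    have "?C \<longleftrightarrow> (\<forall>a b. (S ** H)$a$b + (S ** H)$b$a = 0) \<and> trace H = 0"
      using cond_H[OF sA sS] unfolding H_def by blast
    also have "\<dots> \<longleftrightarrow> (\<forall>j k. (\<Sum>i\<in>UNIV. S$i$j * H$i$k + S$i$k * H$i$j) = 0) \<and> trace H = 0"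
      using sys_form[OF sS, of H] by blast
    also have "\<dots> \<longleftrightarrow> ((\<forall>j. (\<Sum>i\<in>UNIV. S$i$j * H$i$j) = 0)
             \<and> (\<forall>j k. j \<noteq> k \<longrightarrow> (\<Sum>i\<in>UNIV. S$i$j * H$i$k + S$i$k * H$i$j) = 0))
             \<and> (\<Sum>i\<in>UNIV. H$i$i) = 0"
      using sys_form2[of S H] by (simp add: trace_def)
    finally show ?thesis by blast
  qed
  have p3: "WHHD Gt Phi B \<longleftrightarrow> ?C"
    unfolding Gt_def Phi_def B_def WHHD_iff[OF sS] zc ..
  have p4: "SOHHD Gt Phi B \<longleftrightarrow> ?C"
    unfolding Gt_def Phi_def B_def SOHHD_iff[OF sS] zc ..
  show ?thesis using p1 p2 p3 p4 by blast
qed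

end
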